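(* For $n>0$ define $f_n:\mathbb R\to\mathbb R$ by $f_n(x)=\left(1+\frac{x}{\sqrt n}\right)^n e^{-\sqrt n\,x}\,\mathbf 1_{[-\sqrt n,\infty)}(x)$. Then: (1) if $x\ge0$ and $l>n>0$, then $f_l(x)\le f_n(x)\le(2/\sqrt e)^n e^{-\sqrt n\,x/2}$; (2) if $x\le0$ and $l>n>0$, then $f_n(x)\le f_l(x)\le e^{-x^2/2}$; (3) $f_n(x)\to e^{-x^2/2}$ pointwise as $n\to\infty$. *)

theory Defs
  imports "HOL-Analysis.Analysis"
begin

definition fn :: "nat \<Rightarrow> real \<Rightarrow> real" where
  "fn n x = (1 + x / sqrt (real n)) ^ n * exp (- sqrt (real n) * x) * indicator {- sqrt (real n)..} x"

end

theory Submission
  imports Defs "HOL-Real_Asymp.Real_Asymp"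
begin

lemma aux1: "(w::real) \<noteq> 0 \<Longrightarrow> 2 - 2/w - c/w^2 = (2*w^2 - 2*w - c)/w^2"
  by (simp add: field_simps power2_eq_square)
lemma aux2: "(s::real) \<noteq> 0 \<Longrightarrow> t \<noteq> 0 \<Longrightarrow> s^2 * (1/t - 1/s) = s*(s-t)/t"
  by (simp add: field_simps power2_eq_square)
lemma aux3: "(s::real) \<noteq> 0 \<Longrightarrow> t \<noteq> 0 \<Longrightarrow> s*((x/s)^2/(t/s)) = x^2/t"
  by (simp add: field_simps power2_eq_square)

definition kk :: "real \<Rightarrow> real" where "kk u = 2*u - 2*ln(1+u) - u^2/(1+u)"

lemma kk_mono: assumes "-1 < a" "a \<le> b" shows "kk a \<le> kk b"
proof (rule DERIV_nonneg_imp_nondecreasing[of a b kk, OF assms(2)])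
  fix y assume y: "a \<le> y" "y \<le> b"
  hence "1 + y > 0" using assms by linarith
  show "\<exists>d. (kk has_real_derivative d) (at y) \<and> 0 \<le> d"
  proof (intro exI conjI)
    show "(kk has_real_derivative (2 - 2/(1+y) - (2*y*(1+y) - y^2)/(1+y)^2)) (at y)"
      unfolding kk_def using \<open>1+y>0\<close>
      by (auto intro!: derivative_eq_intros simp: power2_eq_square)
    have w: "1+y \<noteq> 0" using \<open>1+y>0\<close> by simp
    have "2 - 2/(1+y) - (2*y*(1+y) - y^2)/(1+y)^2 = (2*(1+y)^2 - 2*(1+y) - (2*y*(1+y) - y^2))/(1+y)^2"
      using aux1[OF w] by simp
    also have "2*(1+y)^2 - 2*(1+y) - (2*y*(1+y) - y^2) = y^2" by (simp add: power2_eq_square algebra_simps)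
    finally have "2 - 2/(1+y) - (2*y*(1+y) - y^2)/(1+y)^2 = y^2/(1+y)^2" .
    thus "0 \<le> 2 - 2/(1+y) - (2*y*(1+y) - y^2)/(1+y)^2" by simp
  qed
qed

lemma kk0: "kk 0 = 0" by (simp add: kk_def)

definition GG :: "real \<Rightarrow> real \<Rightarrow> real" where "GG x s = s^2 * (ln (s+x) - ln s) - s*x"

lemma GG_deriv: assumes "s > 0" "s + x > 0"
  shows "(GG x has_real_derivative (- s * kk (x/s))) (at s)"
proof -
  have "(GG x has_real_derivative (2 * s * (ln (s+x) - ln s) + s^2 * (1/(s+x) - 1/s) - x)) (at s)"
    unfolding GG_def using assms
    apply (auto intro!: derivative_eq_intros)
      done
  moreover have "2 * s * (ln (s+x) - ln s) + s^2 * (1/(s+x) - 1/s) - x = - s * kk (x/s)"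
  proof -
    have e: "1 + x/s = (s+x)/s" using assms by (simp add: field_simps)
    have L: "ln (1 + x/s) = ln (s+x) - ln s" unfolding e using assms by (simp add: ln_div)
    have a1: "s^2 * (1/(s+x) - 1/s) = - s*x/(s+x)" using assms aux2[of s "s+x"] by simp
    have a2: "s * ((x/s)^2/(1+x/s)) = x^2/(s+x)" unfolding e using assms aux3[of s "s+x" x] by simp
    have a3: "- s*x/(s+x) - x = - 2*x + x^2/(s+x)" using assms by (simp add: field_simps power2_eq_square)
    have "- s * kk (x/s) = -2*x + 2 * s * ln (1+x/s) + s * ((x/s)^2/(1+x/s))"
      unfolding kk_def using assms by (simp add: algebra_simps)
    thus ?thesis unfolding a2 a1 L using a3 by (simp add: algebra_simps)
  qed
  ultimately show ?thesis by simp
qed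

lemma GG_dec: assumes "x \<ge> 0" "0 < s" "s \<le> t" shows "GG x t \<le> GG x s"
proof -
  have "GG x s \<ge> GG x t"
  proof (rule DERIV_nonpos_imp_nonincreasing[of s t "GG x", OF assms(3)])
    fix y assume y: "s \<le> y" "y \<le> t"
    have "kk 0 \<le> kk (x/y)" using kk_mono[of 0 "x/y"] y assms by auto
    thus "\<exists>d. (GG x has_real_derivative d) (at y) \<and> d \<le> 0"
      using GG_deriv[of y x] y assms kk0 by (intro exI[of _ "- y * kk (x/y)"]) auto
  qed
  thus ?thesis by simp
qed

lemma GG_inc: assumes "x \<le> 0" "0 < s" "s + x > 0" "s \<le> t" shows "GG x s \<le> GG x t"
proof (rule DERIV_nonneg_imp_nondecreasing[of s t "GG x", OF assms(4)])
  fix y assume y: "s \<le> y" "y \<le> t"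
  have "-1 < x/y" using y assms by (simp add: field_simps)
  hence "kk (x/y) \<le> kk 0" using kk_mono[of "x/y" 0] y assms by (auto simp: divide_nonpos_pos)
  thus "\<exists>d. (GG x has_real_derivative d) (at y) \<and> 0 \<le> d"
    using GG_deriv[of y x] y assms kk0 by (intro exI[of _ "- y * kk (x/y)"]) (auto simp: mult_nonneg_nonpos)
qed

lemma fn_GG: assumes "n > 0" "sqrt (real n) + x > 0"
  shows "fn n x = exp (GG x (sqrt (real n)))"
proof -
  define s where "s = sqrt (real n)"
  have s: "s > 0" "s^2 = real n" using assms by (auto simp: s_def)
  have b: "1 + x/s = (s+x)/s" using s by (simp add: field_simps)
  have "s + x > 0" using assms s_def by simp
  hence bp: "1 + x/s > 0" unfolding b using s by simp
  have "(1 + x/s)^n = exp (real n * ln (1 + x/s))" using bp by (simp add: exp_ln_iff exp_of_nat_mult[symmetric] ln_realpow[symmetric])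
  also have "ln (1 + x/s) = ln (s+x) - ln s" unfolding b using assms s by (simp add: ln_div s_def)
  finally have "(1 + x/s)^n * exp (- s * x) = exp (GG x s)"
    unfolding GG_def s(2)[symmetric] by (simp add: exp_add[symmetric] exp_diff)
  moreover have "x \<in> {- s..}" using assms s_def by auto
  ultimately show ?thesis unfolding fn_def s_def by simp
qed


lemma lim_pos: "(x::real) > 0 \<Longrightarrow> (\<lambda>n::nat. (1 + x / sqrt (real n)) ^ n * exp (- sqrt (real n) * x)) \<longlonglongrightarrow> exp (- x\<^sup>2 / 2)"
  by (real_asymp simp: power2_eq_square)
lemma lim_neg: "(x::real) < 0 \<Longrightarrow> (\<lambda>n::nat. (1 + x / sqrt (real n)) ^ n * exp (- sqrt (real n) * x)) \<longlonglongrightarrow> exp (- x\<^sup>2 / 2)"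
  by (real_asymp simp: power2_eq_square)
lemma lim_all: "(\<lambda>n::nat. (1 + (x::real) / sqrt (real n)) ^ n * exp (- sqrt (real n) * x)) \<longlonglongrightarrow> exp (- x\<^sup>2 / 2)"
proof -
  consider "x > 0" | "x < 0" | "x = 0" by linarith
  thus ?thesis using lim_pos lim_neg by cases auto
qed

lemma fn_lim: "(\<lambda>n. fn n x) \<longlonglongrightarrow> exp (- x\<^sup>2 / 2)"
proof (rule Lim_transform_eventually[OF lim_all])
  obtain N :: nat where N: "real N > x^2" using reals_Archimedean2 by blast
  show "\<forall>\<^sub>F n in sequentially. (1 + x / sqrt (real n)) ^ n * exp (- sqrt (real n) * x) = fn n x"
  proof (rule eventually_sequentiallyI[of N])
    fix n assume "N \<le> n"
    hence "real n > x^2" using N by linarith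
    hence "sqrt (real n) > sqrt (x^2)" by (simp only: real_sqrt_less_iff)
    hence "sqrt (real n) > \<bar>x\<bar>" by simp
    hence "x \<in> {- sqrt (real n)..}" by auto
    thus "(1 + x / sqrt (real n)) ^ n * exp (- sqrt (real n) * x) = fn n x" unfolding fn_def by simp
  qed
qed

lemma fn_nonneg: "fn n x \<ge> 0"
proof (cases "x \<in> {- sqrt (real n)..}")
  case True
  have "1 + x / sqrt (real n) \<ge> 0"
  proof (cases "n = 0")
    case False
    hence p: "sqrt (real n) > 0" by simp
    have "- sqrt (real n) \<le> x" using True by simp
    hence "-1 \<le> x / sqrt (real n)" using p by (simp add: field_simps)
    thus ?thesis by simp
  qed simp
  thus ?thesis unfolding fn_def by simp
qed (simp add: fn_def)

lemma fn_zero: assumes "n > 0" "sqrt (real n) + x \<le> 0" shows "fn n x = 0"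
proof (cases "sqrt (real n) + x = 0")
  case True
  hence "1 + x / sqrt (real n) = 0" using assms by (simp add: field_simps)
  thus ?thesis unfolding fn_def using assms by simp
next
  case False
  hence "x \<notin> {- sqrt (real n)..}" using assms by auto
  thus ?thesis unfolding fn_def by simp
qed

definition mm :: "real \<Rightarrow> real" where "mm u = u - u^2/2 - ln (1+u)"

lemma mm_nonneg: assumes "-1 < u" "u \<le> 0" shows "mm u \<ge> 0"
proof -
  have "mm 0 \<le> mm u"
  proof (rule DERIV_nonpos_imp_nonincreasing[of u 0 mm, OF assms(2)])
    fix y assume y: "u \<le> y" "y \<le> 0"
    hence w: "1 + y > 0" using assms by linarith
    have d: "(mm has_real_derivative (1 - y - 1/(1+y))) (at y)"
      unfolding mm_def using w by (auto intro!: derivative_eq_intros simp: power2_eq_square)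
    have "1 - y - 1/(1+y) = - (y^2/(1+y))" using w by (simp add: field_simps power2_eq_square)
    also have "\<dots> \<le> 0" using w by simp
    finally show "\<exists>d. (mm has_real_derivative d) (at y) \<and> d \<le> 0" using d by blast
  qed
  thus ?thesis by (simp add: mm_def)
qed

lemma GG_le: assumes "x \<le> 0" "0 < s" "s + x > 0" shows "GG x s \<le> - (x ^ 2) / 2"
proof -
  define u where "u = x / s"
  have xu: "x = s * u" using assms by (simp add: u_def)
  have "-1 < u" using assms by (simp add: u_def field_simps)
  moreover have "u \<le> 0" using assms by (simp add: u_def divide_nonpos_pos)
  ultimately have m: "ln (1+u) \<le> u - u^2/2" using mm_nonneg[of u] by (simp add: mm_def)
  have e: "ln (s+x) - ln s = ln (1+u)"
  proof -
    have "1 + u = (s+x)/s" using assms by (simp add: u_def field_simps)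
    thus ?thesis using assms by (simp add: ln_div)
  qed
  have "GG x s = s^2 * ln (1+u) - s^2 * u" unfolding GG_def e by (simp add: xu power2_eq_square algebra_simps)
  also have "\<dots> \<le> s^2 * (u - u^2/2) - s^2 * u" using m by (simp add: mult_left_mono)
  also have "\<dots> = - (x ^ 2) / 2" unfolding xu by (simp add: power2_eq_square algebra_simps)
  finally show ?thesis .
qed

lemma sqrt_e: "sqrt (exp 1) = exp (1/2::real)"
proof -
  have "exp (1::real) = exp (1/2) ^ 2" by (simp add: exp_double[symmetric] power2_eq_square exp_add[symmetric])
  thus ?thesis by simp
qed

lemma bound1: assumes "x \<ge> 0" "n > 0"
  shows "fn n x \<le> (2 / sqrt (exp 1)) ^ n * exp (- sqrt (real n) * x / 2)"
proof -
  define s where "s = sqrt (real n)"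
  define t where "t = x / s"
  have s: "s > 0" "s * s = real n" using assms by (auto simp: s_def)
  have t0: "t \<ge> 0" using assms s by (simp add: t_def)
  have nt: "real n * t = s * x" using s by (simp add: t_def field_simps flip: s(2))
  have "x \<in> {- s..}" using assms s by auto
  hence "fn n x = (1 + t)^n * exp (- s * x)" unfolding fn_def s_def t_def by simp
  also have "exp (- s * x) = exp (-t) ^ n" using nt by (simp flip: exp_of_nat_mult)
  also have "(1 + t)^n * exp (-t) ^ n = ((1+t) * exp (-t))^n" by (simp add: power_mult_distrib)
  also have "\<dots> \<le> (2 / sqrt (exp 1) * exp (- t/2))^n"
  proof (rule power_mono)
    show "0 \<le> (1+t) * exp (-t)" using t0 by simp
    have "1 + (t-1)/2 \<le> exp ((t-1)/2)" by (rule exp_ge_add_one_self)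
    moreover have "\<And>E. 1 + (t-1)/2 \<le> E \<Longrightarrow> 1 + t \<le> 2 * E" by (simp add: field_simps)
    ultimately have "1 + t \<le> 2 * exp ((t-1)/2)" by blast
    hence "(1+t) * exp (-t) \<le> 2 * exp ((t-1)/2) * exp (-t)" by (simp add: mult_right_mono)
    also have "\<dots> = 2 / sqrt (exp 1) * exp (- t/2)" unfolding sqrt_e
      by (simp add: exp_add[symmetric] exp_diff[symmetric] field_simps)
    finally show "(1+t) * exp (-t) \<le> 2 / sqrt (exp 1) * exp (- t/2)" .
  qed
  also have "\<dots> = (2 / sqrt (exp 1))^n * exp (- t/2) ^ n" by (rule power_mult_distrib)
  also have "exp (- t/2) ^ n = exp (- s * x / 2)" using nt by (simp flip: exp_of_nat_mult)
  finally show ?thesis unfolding s_def .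
qed

theorem lemma3p7:
  shows "(\<forall>(x::real) (l::nat) (n::nat). x \<ge> 0 \<and> l > n \<and> n > 0 \<longrightarrow>
            fn l x \<le> fn n x \<and> fn n x \<le> (2 / sqrt (exp 1)) ^ n * exp (- sqrt (real n) * x / 2))
       \<and> (\<forall>(x::real) (l::nat) (n::nat). x \<le> 0 \<and> l > n \<and> n > 0 \<longrightarrow>
            fn n x \<le> fn l x \<and> fn l x \<le> exp (- x\<^sup>2 / 2))
       \<and> (\<forall>x::real. (\<lambda>n. fn n x) \<longlonglongrightarrow> exp (- x\<^sup>2 / 2))"
proof (intro conjI allI impI)
  fix x :: real and l n :: nat
  assume a: "x \<ge> 0 \<and> l > n \<and> n > 0"
  have sl: "sqrt (real n) \<le> sqrt (real l)" using a by simp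
  have p: "sqrt (real n) > 0" using a by simp
  have "sqrt (real l) + x > 0" using a p sl by linarith
  hence "fn l x = exp (GG x (sqrt (real l)))" using a by (intro fn_GG) auto
  also have "\<dots> \<le> exp (GG x (sqrt (real n)))" using a p sl GG_dec by simp
  also have "\<dots> = fn n x" using a p by (intro fn_GG[symmetric]) (auto simp: add_pos_nonneg)
  finally show "fn l x \<le> fn n x" .
  show "fn n x \<le> (2 / sqrt (exp 1)) ^ n * exp (- sqrt (real n) * x / 2)" using a bound1 by simp
next
  fix x :: real and l n :: nat
  assume a: "x \<le> 0 \<and> l > n \<and> n > 0"
  have sl: "sqrt (real n) \<le> sqrt (real l)" using a by simp
  have p: "sqrt (real n) > 0" using a by simp
  show "fn n x \<le> fn l x"
  proof (cases "sqrt (real n) + x > 0")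
    case True
    have "fn n x = exp (GG x (sqrt (real n)))" using a True by (intro fn_GG) auto
    also have "\<dots> \<le> exp (GG x (sqrt (real l)))" using a p sl True GG_inc by simp
    also have "\<dots> = fn l x"
    proof -
      have "sqrt (real l) + x > 0" using True sl by linarith
      thus ?thesis using a by (intro fn_GG[symmetric]) auto
    qed
    finally show ?thesis .
  next
    case False
    thus ?thesis using fn_zero[of n x] fn_nonneg[of l x] a by simp
  qed
  show "fn l x \<le> exp (- x\<^sup>2 / 2)"
  proof (cases "sqrt (real l) + x > 0")
    case True
    have "fn l x = exp (GG x (sqrt (real l)))" using a True by (intro fn_GG) auto
    also have "\<dots> \<le> exp (- x\<^sup>2 / 2)" using a True GG_le[of x "sqrt (real l)"] by simp
    finally show ?thesis .
  next
    case False
    thus ?thesis using fn_zero[of l x] a by simp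
  qed
next
  fix x :: real
  show "(\<lambda>n. fn n x) \<longlonglongrightarrow> exp (- x\<^sup>2 / 2)" by (rule fn_lim)
qed

end
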